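(* Let $k\ge2$, $\sigma_i=\frac{i(k-i)}2$ for $i=0,\dots,k$, and $j\in\{1,\dots,k\}$. Let $M_k^j$ be the $(k-j+1)\times(k-j+1)$ tridiagonal matrix whose upper-diagonal entries are $(M_k^j)_{m,m+1}=\sigma_m$ ($m=1,\dots,k-j$), whose lower-diagonal entries are $(M_k^j)_{m+1,m}=\sigma_{j+m-1}$ ($m=1,\dots,k-j$), whose diagonal entries are $(M_k^j)_{m,m}=-(\sigma_{m-1}+\sigma_{j+m-1})$ ($m=1,\dots,k-j+1$) (so that each column sums to zero), and whose other entries vanish. Then $M_k^j$ is similar to the diagonal matrix $$\mathrm{diag}\big(0,\,-j,\,-(j+(j+1)),\,-(j+(j+1)+(j+2)),\,\dots,\,-(j+(j+1)+\dots+(k-1))\big).$$ *)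

theory Defs
  imports Complex_Main "Jordan_Normal_Form.Matrix"
begin

definition sig :: "nat \<Rightarrow> nat \<Rightarrow> real" where
  "sig k i = real i * (real k - real i) / 2"

text \<open>The (k-j+1)x(k-j+1) tridiagonal matrix M_k^j, with 0-based indices:
  entry (r,r+1) = sigma_(r+1), entry (r+1,r) = sigma_(j+r),
  entry (r,r) = -(sigma_r + sigma_(j+r)), all others 0.\<close>
definition Mkj :: "nat \<Rightarrow> nat \<Rightarrow> real mat" where
  "Mkj k j = mat (k - j + 1) (k - j + 1) (\<lambda>(r, c).
     if c = r + 1 then sig k (r + 1)
     else if r = c + 1 then sig k (j + c)
     else if r = c then - (sig k r + sig k (j + r))
     else 0)"

definition Dkj :: "nat \<Rightarrow> nat \<Rightarrow> real mat" where
  "Dkj k j = mat (k - j + 1) (k - j + 1) (\<lambda>(r, c).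
     if r = c then - real (\<Sum>t\<in>{j..<j + r}. t) else 0)"

end

theory Submission
  imports Defs "Jordan_Normal_Form.Determinant"
begin

definition ff :: "real \<Rightarrow> nat \<Rightarrow> real" where
  "ff x i = (\<Prod>t<i. x - real t)"

lemma ff_0[simp]: "ff x 0 = 1" by (simp add: ff_def)
lemma ff_Suc: "ff x (Suc m) = ff x m * (x - real m)"
  by (simp add: ff_def)
lemma ff_Suc': "ff x (Suc m) = x * ff (x - 1) m"
  unfolding ff_def prod.lessThan_Suc_shift by (simp add: algebra_simps)

lemma ff_zero: "c < i \<Longrightarrow> ff (real c) i = 0"
  unfolding ff_def by (rule prod_zero) auto

lemma ff_diag: "ff (real i) i = fact i"
  by (induction i) (simp_all add: ff_Suc' fact_Suc)

definition lam :: "nat \<Rightarrow> nat \<Rightarrow> real" where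
  "lam j r = - real (\<Sum>t\<in>{j..<j + r}. t)"

lemma lam_closed: "lam j r = - (real r * (2 * real j + real r - 1) / 2)"
proof -
  have "real (\<Sum>t\<in>{j..<j + r}. t) = real r * (2 * real j + real r - 1) / 2"
    by (induction r) (simp_all add: field_simps)
  thus ?thesis by (simp add: lam_def)
qed

definition mu :: "nat \<Rightarrow> nat \<Rightarrow> nat \<Rightarrow> real" where
  "mu k j i = real i * (real j + real i - 1) * (real k - real j - real i + 1) / 2"

lemma key:
  fixes x :: real
  shows "ff (x - 1) i * (x * (real k - x) / 2)
       - ff x i * (x * (real k - x) / 2 + (real j + x) * (real k - (real j + x)) / 2)
       + ff (x + 1) i * ((real j + x) * (real k - (real j + x)) / 2)
       = lam j i * ff x i + (if 0 < i then mu k j i * ff x (i - 1) else 0)"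
proof (cases i)
  case 0 then show ?thesis by (simp add: lam_def)
next
  case (Suc m)
  define P where "P = ff x m"
  have e1: "ff (x - 1) (Suc m) * x = P * (x - real m) * (x - 1 - real m)"
  proof -
    have "ff (x - 1) (Suc m) * x = (x * ff (x - 1) m) * (x - 1 - real m)"
      by (simp add: ff_Suc)
    also have "x * ff (x - 1) m = P * (x - real m)"
      using ff_Suc'[of x m] ff_Suc[of x m] unfolding P_def by simp
    finally show ?thesis by simp
  qed
  have e2: "ff x (Suc m) = P * (x - real m)" by (simp add: P_def ff_Suc)
  have e3: "ff (x+1) (Suc m) = (x + 1) * P" by (simp add: P_def ff_Suc')
  have "ff (x - 1) (Suc m) * (x * (real k - x) / 2) = P * (x - real m) * (x - 1 - real m) * (real k - x) / 2"
    using e1 by (metis (no_types, lifting) mult.assoc times_divide_eq_right)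
  note e1' = this
  have R: "lam j i * ff x i + (if 0 < i then mu k j i * ff x (i - 1) else 0)
     = - (real (Suc m) * (2 * real j + real (Suc m) - 1) / 2) * (P * (x - real m))
       + real (Suc m) * (real j + real (Suc m) - 1) * (real k - real j - real (Suc m) + 1) / 2 * P"
    unfolding Suc using e2 by (simp add: lam_closed mu_def P_def)
  show ?thesis unfolding R unfolding Suc e1' e2 e3
    by (simp add: field_simps)
qed

lemma tri_sum:
  fixes g :: "nat \<Rightarrow> real"
  assumes "c < n"
  shows "(\<Sum>r\<in>{0..<n}. g r * (if c = r+1 then u r else if r = c+1 then v else if r = c then w r else 0))
     = (if 0<c then g (c-1) * u (c-1) else 0) + (if c+1 < n then g (c+1) * v else 0) + g c * w c"
proof -
  have "\<And>r. g r * (if c = r+1 then u r else if r = c+1 then v else if r = c then w r else 0)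
     = (if r = c - 1 then (if 0 < c then g r * u r else 0) else 0)
     + (if r = c + 1 then g r * v else 0) + (if r = c then g r * w r else 0)"
    by auto
  then have "(\<Sum>r\<in>{0..<n}. g r * (if c = r+1 then u r else if r = c+1 then v else if r = c then w r else 0))
    = (\<Sum>r\<in>{0..<n}. (if r = c - 1 then (if 0 < c then g r * u r else 0) else 0))
     + (\<Sum>r\<in>{0..<n}. (if r = c + 1 then g r * v else 0)) + (\<Sum>r\<in>{0..<n}. (if r = c then g r * w r else 0))"
    by (simp add: sum.distrib)
  also have "\<dots> = (if 0<c then g (c-1) * u (c-1) else 0) + (if c+1 < n then g (c+1) * v else 0) + g c * w c"
    using assms by (simp add: sum.delta)
  finally show ?thesis .
qed

lemma bi_sum:
  fixes h :: "nat \<Rightarrow> real"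
  assumes "i < n"
  shows "(\<Sum>s\<in>{0..<n}. (if s = i then a else if s+1 = i then b else 0) * h s)
     = a * h i + (if 0 < i then b * h (i-1) else 0)"
proof -
  have "\<And>s. (if s = i then a else if s+1 = i then b else 0) * h s
     = (if s = i then a * h s else 0) + (if s = i - 1 then (if 0 < i then b * h s else 0) else 0)"
    by auto
  then have "(\<Sum>s\<in>{0..<n}. (if s = i then a else if s+1 = i then b else 0) * h s)
     = (\<Sum>s\<in>{0..<n}. (if s = i then a * h s else 0)) + (\<Sum>s\<in>{0..<n}. (if s = i - 1 then (if 0 < i then b * h s else 0) else 0))"
    by (simp add: sum.distrib)
  also have "\<dots> = a * h i + (if 0 < i then b * h (i-1) else 0)"
    using assms by (simp add: sum.delta)
  finally show ?thesis .
qed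

lemma bi_sum2:
  fixes h :: "nat \<Rightarrow> real"
  assumes "s < n"
  shows "(\<Sum>i\<in>{0..<n}. h i * (if s = i then a i else if s+1 = i then b i else 0))
     = h s * a s + (if s + 1 < n then h (s+1) * b (s+1) else 0)"
proof -
  have "\<And>i. h i * (if s = i then a i else if s+1 = i then b i else 0)
     = (if i = s then h i * a i else 0) + (if i = s + 1 then h i * b i else 0)"
    by auto
  then have "(\<Sum>i\<in>{0..<n}. h i * (if s = i then a i else if s+1 = i then b i else 0))
     = (\<Sum>i\<in>{0..<n}. (if i = s then h i * a i else 0)) + (\<Sum>i\<in>{0..<n}. (if i = s + 1 then h i * b i else 0))"
    by (simp add: sum.distrib)
  also have "\<dots> = h s * a s + (if s + 1 < n then h (s+1) * b (s+1) else 0)"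
    using assms by (simp add: sum.delta)
  finally show ?thesis .
qed

lemma mult_entry:
  assumes "A \<in> carrier_mat n m" "B \<in> carrier_mat m p" "i < n" "c < p"
  shows "(A*B)$$(i,c) = (\<Sum>s\<in>{0..<m}. A$$(i,s)*B$$(s,c))"
  using assms by (auto simp: scalar_prod_def)

definition Fm :: "nat \<Rightarrow> real mat" where
  "Fm n = mat n n (\<lambda>(i,c). ff (real c) i)"
definition Tm :: "nat \<Rightarrow> nat \<Rightarrow> nat \<Rightarrow> real mat" where
  "Tm k j n = mat n n (\<lambda>(i,s). if s = i then lam j i else if s + 1 = i then mu k j i else 0)"
definition acoef :: "nat \<Rightarrow> nat \<Rightarrow> nat \<Rightarrow> nat \<Rightarrow> real" where
  "acoef k j d s = (\<Prod>t\<in>{s<..d}. mu k j t / (lam j d - lam j (t-1)))"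
definition Am :: "nat \<Rightarrow> nat \<Rightarrow> nat \<Rightarrow> real mat" where
  "Am k j n = mat n n (\<lambda>(d,s). if s \<le> d then acoef k j d s else 0)"

lemma sig0: "sig k 0 = 0" by (simp add: sig_def)
lemma sigk: "sig k k = 0" by (simp add: sig_def)

lemma FM:
  assumes "1 \<le> j" "j \<le> k"
  shows "Fm (k-j+1) * Mkj k j = Tm k j (k-j+1) * Fm (k-j+1)"
proof (rule eq_matI)
  let ?n = "k-j+1"
  fix i c assume i: "i < dim_row (Tm k j ?n * Fm ?n)" and c: "c < dim_col (Tm k j ?n * Fm ?n)"
  then have i: "i < ?n" and c: "c < ?n" by (auto simp: Tm_def Fm_def)
  have "(Fm ?n * Mkj k j) $$ (i, c) = (\<Sum>r\<in>{0..<?n}. ff (real r) i *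
     (if c = r+1 then sig k (r+1) else if r = c+1 then sig k (j+c) else if r = c then - (sig k r + sig k (j + r)) else 0))"
    using i c by (simp add: Fm_def Mkj_def scalar_prod_def)
  also have "\<dots> = (if 0<c then ff (real (c-1)) i * sig k (c-1+1) else 0) + (if c+1 < ?n then ff (real (c+1)) i * sig k (j+c) else 0)
      + ff (real c) i * (- (sig k c + sig k (j + c)))"
    by (rule tri_sum[OF c])
  also have "\<dots> = ff (real c - 1) i * (real c * (real k - real c) / 2)
       - ff (real c) i * (real c * (real k - real c) / 2 + (real j + real c) * (real k - (real j + real c)) / 2)
       + ff (real c + 1) i * ((real j + real c) * (real k - (real j + real c)) / 2)"
  proof -
    have A: "(if 0<c then ff (real (c-1)) i * sig k (c-1+1) else 0) = ff (real c - 1) i * (real c * (real k - real c) / 2)"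
      by (cases c) (auto simp: sig_def)
    have B: "(if c+1 < ?n then ff (real (c+1)) i * sig k (j+c) else 0) = ff (real c + 1) i * ((real j + real c) * (real k - (real j + real c)) / 2)"
    proof (cases "c + 1 < ?n")
      case True then show ?thesis by (simp add: sig_def add.commute)
    next
      case False then have "j + c = k" using c assms by auto
      then have "real j + real c = real k" by (metis of_nat_add)
      then show ?thesis using False by simp
    qed
    show ?thesis unfolding A B by (simp add: sig_def algebra_simps)
  qed
  also have "\<dots> = lam j i * ff (real c) i + (if 0 < i then mu k j i * ff (real c) (i - 1) else 0)"
    by (rule key)
  also have "\<dots> = (\<Sum>s\<in>{0..<?n}. (if s = i then lam j i else if s+1 = i then mu k j i else 0) * ff (real c) s)"
    by (rule bi_sum[OF i, symmetric])
  also have "\<dots> = (Tm k j ?n * Fm ?n) $$ (i, c)"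
    by (subst mult_entry[of _ ?n ?n _ ?n], insert i c, auto simp: Fm_def Tm_def intro!: sum.cong)
  finally show "(Fm ?n * Mkj k j) $$ (i, c) = (Tm k j ?n * Fm ?n) $$ (i, c)" .
qed (auto simp: Fm_def Tm_def Mkj_def)

lemma lam_strict:
  assumes "1 \<le> j" "s < d"
  shows "lam j d < lam j s"
proof -
  have "{j..<j+s} \<subset> {j..<j+d}" using assms by auto
  have "(\<Sum>t\<in>{j..<j+d}. t) = (\<Sum>t\<in>{j..<j+s}. t) + (\<Sum>t\<in>{j+s..<j+d}. t)"
    using assms by (simp add: sum.atLeastLessThan_concat)
  moreover have "(\<Sum>t\<in>{j+s..<j+d}. t) \<ge> j + s"
    using assms by (intro member_le_sum) auto
  ultimately have "(\<Sum>t\<in>{j..<j+d}. t) > (\<Sum>t\<in>{j..<j+s}. t)" using assms by linarith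
  then show ?thesis unfolding lam_def neg_less_iff_less of_nat_less_iff .
qed

lemma acoef_diag: "acoef k j d d = 1" by (simp add: acoef_def)

lemma acoef_rec:
  assumes "s < d"
  shows "acoef k j d s = mu k j (s+1) / (lam j d - lam j s) * acoef k j d (s+1)"
proof -
  have "{s<..d} = insert (Suc s) {Suc s<..d}" using assms by auto
  then show ?thesis unfolding acoef_def by simp
qed

lemma AT:
  assumes "1 \<le> j" "j \<le> k"
  shows "Am k j (k-j+1) * Tm k j (k-j+1) = Dkj k j * Am k j (k-j+1)"
proof (rule eq_matI)
  let ?n = "k-j+1"
  fix d s assume d: "d < dim_row (Dkj k j * Am k j ?n)" and s: "s < dim_col (Dkj k j * Am k j ?n)"
  then have d: "d < ?n" and s: "s < ?n" by (auto simp: Dkj_def Am_def)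
  have "(Am k j ?n * Tm k j ?n) $$ (d, s) = (\<Sum>i\<in>{0..<?n}. Am k j ?n $$ (d,i) * (if s = i then lam j i else if s+1 = i then mu k j i else 0))"
    by (subst mult_entry[of _ ?n ?n _ ?n], insert d s, auto simp: Am_def Tm_def intro!: sum.cong)
  also have "\<dots> = Am k j ?n $$ (d,s) * lam j s + (if s + 1 < ?n then Am k j ?n $$ (d,s+1) * mu k j (s+1) else 0)"
    by (rule bi_sum2[OF s])
  also have "\<dots> = lam j d * Am k j ?n $$ (d,s)"
  proof (cases "s \<le> d")
    case True
    show ?thesis
    proof (cases "s = d")
      case True then show ?thesis using d s by (simp add: Am_def acoef_diag)
    next
      case False
      then have sd: "s < d" using \<open>s \<le> d\<close> by simp
      have ne: "lam j d - lam j s \<noteq> 0" using lam_strict[OF assms(1) sd] by simp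
      have "acoef k j d s * lam j s + acoef k j d (s+1) * mu k j (s+1) = lam j d * acoef k j d s"
        unfolding acoef_rec[OF sd] using ne by (simp add: field_simps)
      then show ?thesis using d s sd by (simp add: Am_def)
    qed
  next
    case False then show ?thesis using d s by (simp add: Am_def)
  qed
  also have "\<dots> = (\<Sum>i\<in>{0..<?n}. (if i = d then lam j d * Am k j ?n $$ (i,s) else 0))"
    using d by (simp only: sum.delta[OF finite_atLeastLessThan]) simp
  also have "\<dots> = (\<Sum>i\<in>{0..<?n}. Dkj k j $$ (d,i) * Am k j ?n $$ (i,s))"
    by (rule sum.cong) (use d s in \<open>auto simp: Am_def Dkj_def lam_def\<close>)
  also have "\<dots> = (Dkj k j * Am k j ?n) $$ (d, s)"
    by (rule mult_entry[symmetric]) (use d s in \<open>auto simp: Am_def Dkj_def\<close>)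
  finally show "(Am k j ?n * Tm k j ?n) $$ (d, s) = (Dkj k j * Am k j ?n) $$ (d, s)" .
qed (auto simp: Am_def Dkj_def Tm_def)

theorem lemmaC1:
  fixes k j :: nat
  assumes "k \<ge> 2" and "1 \<le> j" and "j \<le> k"
  shows "similar_mat (Mkj k j) (Dkj k j)"
proof -
  let ?n = "k-j+1"
  define A where "A = Am k j ?n"
  define F where "F = Fm ?n"
  define T where "T = Tm k j ?n"
  define Q where "Q = A * F"
  define M where "M = Mkj k j"
  define D where "D = Dkj k j"
  have cA: "A \<in> carrier_mat ?n ?n" by (simp add: A_def Am_def)
  have cF: "F \<in> carrier_mat ?n ?n" by (simp add: F_def Fm_def)
  have cT: "T \<in> carrier_mat ?n ?n" by (simp add: T_def Tm_def)
  have cM: "M \<in> carrier_mat ?n ?n" by (simp add: M_def Mkj_def)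
  have cD: "D \<in> carrier_mat ?n ?n" by (simp add: D_def Dkj_def)
  have cQ: "Q \<in> carrier_mat ?n ?n" using cA cF by (simp add: Q_def)
  have detA: "det A = 1"
  proof -
    have "det A = prod_list (diag_mat A)"
      by (rule det_lower_triangular[OF _ cA]) (auto simp: A_def Am_def)
    also have "diag_mat A = map (\<lambda>i. 1) [0..<?n]"
      by (auto simp: diag_mat_def A_def Am_def acoef_diag)
    finally show ?thesis by (simp add: map_replicate_const prod_list_replicate del: upt_Suc)
  qed
  have detF: "det F \<noteq> 0"
  proof -
    have "det F = prod_list (diag_mat F)"
      by (rule det_upper_triangular[OF _ cF]) (auto simp: F_def Fm_def ff_zero)
    also have "diag_mat F = map (\<lambda>i. fact i) [0..<?n]"
      by (auto simp: diag_mat_def F_def Fm_def ff_diag)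
    finally show ?thesis by (auto simp: prod_list_zero_iff)
  qed
  have "det Q \<noteq> 0" unfolding Q_def det_mult[OF cA cF] detA using detF by simp
  from det_non_zero_imp_unit[OF cQ this, of "()"]
  obtain Qi where cQi: "Qi \<in> carrier_mat ?n ?n" and QiQ: "Qi * Q = 1\<^sub>m ?n" and QQi: "Q * Qi = 1\<^sub>m ?n"
    unfolding Units_def ring_mat_def by auto
  have FMT: "F * M = T * F" unfolding F_def M_def T_def using FM[OF assms(2,3)] .
  have ATD: "A * T = D * A" unfolding A_def D_def T_def using AT[OF assms(2,3)] .
  have QM: "Q * M = D * Q"
  proof -
    have "Q * M = A * (F * M)" unfolding Q_def using cA cF cM by (simp add: assoc_mult_mat)
    also have "\<dots> = A * (T * F)" by (simp add: FMT)
    also have "\<dots> = (A * T) * F" using cA cF cT by (simp add: assoc_mult_mat)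
    also have "\<dots> = (D * A) * F" by (simp add: ATD)
    also have "\<dots> = D * Q" unfolding Q_def using cA cF cD by (simp add: assoc_mult_mat)
    finally show ?thesis .
  qed
  have "M = Qi * D * Q"
  proof -
    have "M = (Qi * Q) * M" using QiQ cM by simp
    also have "\<dots> = Qi * (Q * M)" using cQi cQ cM by (simp add: assoc_mult_mat)
    also have "\<dots> = Qi * (D * Q)" by (simp add: QM)
    also have "\<dots> = Qi * D * Q" using cQi cQ cD by (simp add: assoc_mult_mat)
    finally show ?thesis .
  qed
  then show ?thesis unfolding M_def[symmetric] D_def[symmetric]
    by (intro similar_matI[of _ _ Qi Q ?n]) (use cM cD cQ cQi QiQ QQi in auto)
qed

end
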